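(* Let $p$ be a prime, $\eta>0$, and let $H$ be a nonempty subset of $\mathbb{F}_p^*$ with $|H\cdot H|<(2-\eta)|H|$. Then there exist a positive integer $m\le 1/\eta$, a subgroup $H^*$ of $\mathbb{F}_p^*$, and elements $u_1,\dots,u_m\in H$ such that $$H\subseteq\bigcup_{i=1}^m u_iH^*\qquad\text{and}\qquad \frac{|H|}{m}\le |H^*|\le\frac{2-\eta}{2m-1}\,|H|.$$
   Context: $\mathbb{F}_p^*$ is the multiplicative group of the field with $p$ elements. For $X\subseteq\mathbb{F}_p^*$, $X\cdot X=\{xy: x,y\in X\}$, and $uH^*=\{uh:h\in H^*\}$. *)

theory Defs
  imports "HOL-Number_Theory.Residues" "HOL-Algebra.Multiplicative_Group" "HOL-Algebra.Coset"
begin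

text \<open>The multiplicative group F_p^* of the field with p elements, modelled as the
units of the residue ring Z/pZ (carrier {1..p-1} of int, multiplication mod p).\<close>

definition Fpstar :: "int \<Rightarrow> int monoid" where
  "Fpstar p = mult_of (residue_ring p)"

definition prodset :: "int \<Rightarrow> int set \<Rightarrow> int set" where
  "prodset p X = {x \<otimes>\<^bsub>Fpstar p\<^esub> y | x y. x \<in> X \<and> y \<in> X}"

end

theory Submission
  imports Defs
begin

definition pset :: "('a,'b) monoid_scheme \<Rightarrow> 'a set \<Rightarrow> 'a set \<Rightarrow> 'a set" where
  "pset G A B = {a \<otimes>\<^bsub>G\<^esub> b | a b. a \<in> A \<and> b \<in> B}"

definition stab :: "('a,'b) monoid_scheme \<Rightarrow> 'a set \<Rightarrow> 'a set" where
  "stab G X = {g \<in> carrier G. (\<lambda>x. g \<otimes>\<^bsub>G\<^esub> x) ` X = X}"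

locale fcg = comm_group + assumes fin: "finite (carrier G)"

context fcg
begin

lemma fin_sub: "X \<subseteq> carrier G \<Longrightarrow> finite X"
  using fin finite_subset by blast

lemma stab_sub_eq:
  assumes "g \<in> carrier G" "X \<subseteq> carrier G" "(\<lambda>x. g \<otimes> x) ` X \<subseteq> X"
  shows "(\<lambda>x. g \<otimes> x) ` X = X"
proof -
  have "inj_on (\<lambda>x. g \<otimes> x) X"
    using assms(1,2) unfolding inj_on_def by (metis Units_l_cancel Units_eq subsetD)
  then have "card ((\<lambda>x. g \<otimes> x) ` X) = card X" by (rule card_image)
  then show ?thesis using assms fin_sub card_subset_eq by metis
qed

lemma stab_I:
  assumes "g \<in> carrier G" "X \<subseteq> carrier G" "\<And>x. x \<in> X \<Longrightarrow> g \<otimes> x \<in> X"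
  shows "g \<in> stab G X"
  using stab_sub_eq[OF assms(1,2)] assms by (auto simp: stab_def)

lemma stab_mem: "g \<in> stab G X \<Longrightarrow> x \<in> X \<Longrightarrow> g \<otimes> x \<in> X"
  unfolding stab_def by blast

lemma stab_carrier: "stab G X \<subseteq> carrier G"
  unfolding stab_def by blast

lemma stab_subgroup:
  assumes X: "X \<subseteq> carrier G"
  shows "subgroup (stab G X) G"
proof
  show "stab G X \<subseteq> carrier G" by (rule stab_carrier)
  show "\<one> \<in> stab G X" using X by (intro stab_I) auto
  fix g h assume g: "g \<in> stab G X" and h: "h \<in> stab G X"
  have gc: "g \<in> carrier G" and hc: "h \<in> carrier G" using g h stab_carrier by auto
  show "g \<otimes> h \<in> stab G X"
  proof (rule stab_I)
    fix x assume "x \<in> X"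
    then have "g \<otimes> (h \<otimes> x) \<in> X" using g h stab_mem by blast
    then show "g \<otimes> h \<otimes> x \<in> X" using gc hc X \<open>x \<in> X\<close> by (simp add: m_assoc subsetD)
  qed (use gc hc X in auto)
  show "inv g \<in> stab G X"
  proof (rule stab_I)
    fix x assume x: "x \<in> X"
    have "x \<in> (\<lambda>x. g \<otimes> x) ` X" using g x unfolding stab_def by blast
    then obtain y where y: "y \<in> X" "x = g \<otimes> y" by blast
    then show "inv g \<otimes> x \<in> X" using gc X by (simp add: m_assoc[symmetric] subsetD)
  qed (use gc X in auto)
qed

lemma stab_inv: "X \<subseteq> carrier G \<Longrightarrow> g \<in> stab G X \<Longrightarrow> inv g \<in> stab G X"
  using subgroup.m_inv_closed[OF stab_subgroup] by blast

lemma stab_mult: "X \<subseteq> carrier G \<Longrightarrow> g \<in> stab G X \<Longrightarrow> h \<in> stab G X \<Longrightarrow> g \<otimes> h \<in> stab G X"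
  using subgroup.m_closed[OF stab_subgroup] by blast

lemma stab_one: "X \<subseteq> carrier G \<Longrightarrow> \<one> \<in> stab G X"
  using subgroup.one_closed[OF stab_subgroup] by blast

lemma finite_stab: "finite (stab G X)"
  using fin_sub stab_carrier by blast

lemma stab_not_sub:
  assumes "g \<in> carrier G" "X \<subseteq> carrier G" "g \<notin> stab G X"
  obtains x where "x \<in> X" "g \<otimes> x \<notin> X"
  using stab_I assms by blast

lemma coset_diff:
  assumes "a \<in> carrier G" "b \<in> carrier G" "c \<in> carrier G"
  shows "(a \<otimes> c) \<otimes> inv (b \<otimes> c) = a \<otimes> inv b"
  using assms by (simp add: inv_mult m_ac)

lemma coset_inter_card:
  assumes K1: "K1 \<subseteq> carrier G" "\<And>x y. x \<in> K1 \<Longrightarrow> y \<in> K1 \<Longrightarrow> x \<otimes> inv y \<in> K1"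
    and K2: "K2 \<subseteq> carrier G" "\<And>x y. x \<in> K2 \<Longrightarrow> y \<in> K2 \<Longrightarrow> x \<otimes> inv y \<in> K2"
    and u: "u \<in> carrier G" and v: "v \<in> carrier G" and S: "K1 \<inter> K2 \<subseteq> S" "finite S"
  shows "card ((\<lambda>k. k \<otimes> u) ` K1 \<inter> (\<lambda>k. k \<otimes> v) ` K2) \<le> card S"
proof (cases "(\<lambda>k. k \<otimes> u) ` K1 \<inter> (\<lambda>k. k \<otimes> v) ` K2 = {}")
  case True then show ?thesis by simp
next
  case False
  let ?I = "(\<lambda>k. k \<otimes> u) ` K1 \<inter> (\<lambda>k. k \<otimes> v) ` K2"
  obtain t where t: "t \<in> ?I" using False by blast
  have Ic: "?I \<subseteq> carrier G" using K1 u by auto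
  have tc: "t \<in> carrier G" using t Ic by blast
  have inj: "inj_on (\<lambda>z. z \<otimes> inv t) ?I"
    using Ic tc unfolding inj_on_def by (metis right_cancel inv_closed subsetD)
  have "(\<lambda>z. z \<otimes> inv t) ` ?I \<subseteq> K1 \<inter> K2"
  proof
    fix y assume "y \<in> (\<lambda>z. z \<otimes> inv t) ` ?I"
    then obtain z where z: "z \<in> ?I" "y = z \<otimes> inv t" by blast
    obtain k k' where "k \<in> K1" "z = k \<otimes> u" "k' \<in> K1" "t = k' \<otimes> u" using z t by blast
    then have 1: "y \<in> K1" using z K1 u coset_diff by (auto simp: subsetD)
    obtain j j' where "j \<in> K2" "z = j \<otimes> v" "j' \<in> K2" "t = j' \<otimes> v" using z t by blast
    then have 2: "y \<in> K2" using z K2 v coset_diff by (auto simp: subsetD)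
    show "y \<in> K1 \<inter> K2" using 1 2 by blast
  qed
  then have "card ((\<lambda>z. z \<otimes> inv t) ` ?I) \<le> card S"
    using S card_mono by (metis subset_trans)
  then show ?thesis using card_image[OF inj] by simp
qed

lemma stab_diff_closed: "X \<subseteq> carrier G \<Longrightarrow> x \<in> stab G X \<Longrightarrow> y \<in> stab G X \<Longrightarrow> x \<otimes> inv y \<in> stab G X"
  using stab_mult stab_inv by blast

lemma stab_Int_sub:
  assumes "X \<subseteq> carrier G" "Y \<subseteq> carrier G"
  shows "stab G X \<inter> stab G Y \<subseteq> stab G (X \<union> Y)"
proof
  fix g assume g: "g \<in> stab G X \<inter> stab G Y"
  show "g \<in> stab G (X \<union> Y)"
    using g assms stab_carrier by (intro stab_I) (auto intro: stab_mem)
qed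

lemma half_count:
  assumes X: "X \<subseteq> carrier G" and Y: "Y \<subseteq> carrier G"
    and k1: "k1 \<in> stab G X" and w: "w \<in> Y" and nw: "k1 \<otimes> w \<notin> X \<union> Y"
  shows "card (stab G Y) \<le> card ((Y - X) \<inter> (\<lambda>k. k \<otimes> w) ` stab G Y)
                + card ((X - Y) \<inter> (\<lambda>k. k \<otimes> (k1 \<otimes> w)) ` stab G Y)"
proof -
  let ?K2 = "stab G Y"
  let ?Z = "(\<lambda>k. k \<otimes> w) ` ?K2"
  let ?W = "(\<lambda>k. k \<otimes> (k1 \<otimes> w)) ` ?K2"
  have wc: "w \<in> carrier G" using w Y by blast
  have k1c: "k1 \<in> carrier G" using k1 stab_carrier by blast
  have injZ: "inj_on (\<lambda>k. k \<otimes> w) ?K2"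
    using wc stab_carrier unfolding inj_on_def by (metis right_cancel subsetD)
  have cZ: "card ?Z = card ?K2" using card_image[OF injZ] .
  have ZY: "?Z \<subseteq> Y"
  proof
    fix z assume "z \<in> ?Z"
    then obtain k where "k \<in> ?K2" "z = k \<otimes> w" by blast
    then show "z \<in> Y" using stab_mem w by blast
  qed
  have finZ: "finite ?Z" using finite_stab by blast
  have "card ?Z = card (?Z - X) + card (?Z \<inter> X)"
    using card_Int_Diff[OF finZ, of X] by linarith
  moreover have "card (?Z - X) \<le> card ((Y - X) \<inter> ?Z)"
    using ZY finZ by (intro card_mono) auto
  moreover have "card (?Z \<inter> X) \<le> card ((X - Y) \<inter> ?W)"
  proof -
    have inj: "inj_on (\<lambda>z. k1 \<otimes> z) (?Z \<inter> X)"
      using k1c X unfolding inj_on_def by (metis Units_l_cancel Units_eq IntD2 subsetD)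
    have "(\<lambda>z. k1 \<otimes> z) ` (?Z \<inter> X) \<subseteq> (X - Y) \<inter> ?W"
    proof
      fix y assume "y \<in> (\<lambda>z. k1 \<otimes> z) ` (?Z \<inter> X)"
      then obtain k where k: "k \<in> ?K2" "k \<otimes> w \<in> X" "y = k1 \<otimes> (k \<otimes> w)" by blast
      have kc: "k \<in> carrier G" using k stab_carrier by blast
      have y1: "y \<in> X" using k k1 stab_mem by blast
      have y2: "y = k \<otimes> (k1 \<otimes> w)" using k kc k1c wc by (simp add: m_lcomm)
      have y3: "y \<notin> Y"
      proof
        assume "y \<in> Y"
        then have "inv k \<otimes> y \<in> Y" using stab_inv[OF Y k(1)] stab_mem by blast
        also have "inv k \<otimes> y = k1 \<otimes> w" using y2 kc k1c wc by (simp add: m_assoc[symmetric])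
        finally show False using nw by blast
      qed
      show "y \<in> (X - Y) \<inter> ?W" using y1 y2 y3 k by blast
    qed
    then have "card ((\<lambda>z. k1 \<otimes> z) ` (?Z \<inter> X)) \<le> card ((X - Y) \<inter> ?W)"
      using finite_stab by (intro card_mono) auto
    then show ?thesis using card_image[OF inj] by simp
  qed
  ultimately show ?thesis using cZ by linarith
qed

lemma union_stab:
  assumes X: "X \<subseteq> carrier G" and Y: "Y \<subseteq> carrier G"
  shows "min (card X + card (stab G X)) (card Y + card (stab G Y))
          \<le> card (X \<union> Y) + card (stab G (X \<union> Y))"
proof (rule ccontr)
  assume A: "\<not> ?thesis"
  let ?U = "X \<union> Y" let ?S = "stab G ?U" let ?K1 = "stab G X" let ?K2 = "stab G Y"
  have U: "?U \<subseteq> carrier G" using X Y by blast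
  have fX: "finite X" "finite Y" using X Y fin_sub by auto
  have "?U = X \<union> (Y - X)" by blast
  then have c1: "card ?U = card X + card (Y - X)"
    using fX card_Un_disjoint[of X "Y - X"] by auto
  have "?U = Y \<union> (X - Y)" by blast
  then have c2: "card ?U = card Y + card (X - Y)"
    using fX card_Un_disjoint[of Y "X - Y"] by auto
  have A': "card ?U + card ?S < card X + card ?K1" "card ?U + card ?S < card Y + card ?K2"
    using A by auto
  have h1: "card (Y - X) + card ?S < card ?K1" using A'(1) c1 by linarith
  have h2: "card (X - Y) + card ?S < card ?K2" using A'(2) c2 by linarith
  have "\<not> ?K1 \<subseteq> ?S"
  proof
    assume "?K1 \<subseteq> ?S"
    then have "card ?K1 \<le> card ?S" by (rule card_mono[OF finite_stab])
    then show False using h1 by linarith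
  qed
  then obtain k1 where k1: "k1 \<in> ?K1" "k1 \<notin> ?S" by blast
  have k1c0: "k1 \<in> carrier G" using k1 stab_carrier by blast
  obtain w where w: "w \<in> ?U" "k1 \<otimes> w \<notin> ?U"
    using stab_not_sub[OF k1c0 U k1(2)] by blast
  have "w \<notin> X" using stab_mem[OF k1(1)] w by blast
  then have wY: "w \<in> Y" "w \<notin> X" using w(1) by blast+
  have "\<not> ?K2 \<subseteq> ?S"
  proof
    assume "?K2 \<subseteq> ?S"
    then have "card ?K2 \<le> card ?S" by (rule card_mono[OF finite_stab])
    then show False using h2 by linarith
  qed
  then obtain k2 where k2: "k2 \<in> ?K2" "k2 \<notin> ?S" by blast
  have k2c0: "k2 \<in> carrier G" using k2 stab_carrier by blast
  obtain v where v: "v \<in> ?U" "k2 \<otimes> v \<notin> ?U"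
    using stab_not_sub[OF k2c0 U k2(2)] by blast
  have "v \<notin> Y" using stab_mem[OF k2(1)] v by blast
  then have vX: "v \<in> X" "v \<notin> Y" using v(1) by blast+
  define Z where "Z = (\<lambda>k. k \<otimes> w) ` ?K2"
  define W where "W = (\<lambda>k. k \<otimes> (k1 \<otimes> w)) ` ?K2"
  define Z' where "Z' = (\<lambda>k. k \<otimes> v) ` ?K1"
  define W' where "W' = (\<lambda>k. k \<otimes> (k2 \<otimes> v)) ` ?K1"
  have e1: "card ?K2 \<le> card ((Y - X) \<inter> Z) + card ((X - Y) \<inter> W)"
    unfolding Z_def W_def by (rule half_count[OF X Y k1(1) wY(1) w(2)])
  have e2: "card ?K1 \<le> card ((X - Y) \<inter> Z') + card ((Y - X) \<inter> W')"
  proof -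
    have v2: "k2 \<otimes> v \<notin> Y \<union> X" using v(2) by blast
    show ?thesis unfolding Z'_def W'_def by (rule half_count[OF Y X k2(1) vX(1) v2])
  qed
  have wc: "w \<in> carrier G" "v \<in> carrier G" using wY vX X Y by auto
  have k1c: "k1 \<in> carrier G" "k2 \<in> carrier G" using k1 k2 stab_carrier by auto
  have SI: "?K1 \<inter> ?K2 \<subseteq> ?S" by (rule stab_Int_sub[OF X Y])
  have SI': "?K2 \<inter> ?K1 \<subseteq> ?S" using SI by blast
  have i1: "card (Z \<inter> W') \<le> card ?S"
    unfolding Z_def W'_def
    by (rule coset_inter_card[OF stab_carrier stab_diff_closed[OF Y] stab_carrier
          stab_diff_closed[OF X] wc(1) m_closed[OF k1c(2) wc(2)] SI' finite_stab])
  have i2: "card (W \<inter> Z') \<le> card ?S"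
    unfolding W_def Z'_def
    by (rule coset_inter_card[OF stab_carrier stab_diff_closed[OF Y] stab_carrier
          stab_diff_closed[OF X] m_closed[OF k1c(1) wc(1)] wc(2) SI' finite_stab])
  have fD: "finite (Y - X)" "finite (X - Y)" using fX by auto
  have fZ: "finite Z" "finite W" "finite Z'" "finite W'" unfolding Z_def W_def Z'_def W'_def
    using finite_stab by auto
  have d1: "card ((Y - X) \<inter> Z) + card ((Y - X) \<inter> W') \<le> card (Y - X) + card (Z \<inter> W')"
  proof -
    have "card ((Y - X) \<inter> Z) + card ((Y - X) \<inter> W') =
          card (((Y - X) \<inter> Z) \<union> ((Y - X) \<inter> W')) + card (((Y - X) \<inter> Z) \<inter> ((Y - X) \<inter> W'))"
      using fD by (intro card_Un_Int) auto
    moreover have "card (((Y - X) \<inter> Z) \<union> ((Y - X) \<inter> W')) \<le> card (Y - X)"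
      using fD by (intro card_mono) auto
    moreover have "card (((Y - X) \<inter> Z) \<inter> ((Y - X) \<inter> W')) \<le> card (Z \<inter> W')"
      using fZ by (intro card_mono) auto
    ultimately show ?thesis by linarith
  qed
  have d2: "card ((X - Y) \<inter> W) + card ((X - Y) \<inter> Z') \<le> card (X - Y) + card (W \<inter> Z')"
  proof -
    have "card ((X - Y) \<inter> W) + card ((X - Y) \<inter> Z') =
          card (((X - Y) \<inter> W) \<union> ((X - Y) \<inter> Z')) + card (((X - Y) \<inter> W) \<inter> ((X - Y) \<inter> Z'))"
      using fD by (intro card_Un_Int) auto
    moreover have "card (((X - Y) \<inter> W) \<union> ((X - Y) \<inter> Z')) \<le> card (X - Y)"
      using fD by (intro card_mono) auto
    moreover have "card (((X - Y) \<inter> W) \<inter> ((X - Y) \<inter> Z')) \<le> card (W \<inter> Z')"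
      using fZ by (intro card_mono) auto
    ultimately show ?thesis by linarith
  qed
  show False using e1 e2 i1 i2 d1 d2 h1 h2 by linarith
qed

lemma union_family:
  assumes "finite F" "F \<noteq> {}" "\<And>X. X \<in> F \<Longrightarrow> X \<subseteq> carrier G"
    "\<And>X. X \<in> F \<Longrightarrow> N \<le> card X + card (stab G X)"
  shows "N \<le> card (\<Union>F) + card (stab G (\<Union>F))"
  using assms
proof (induction F rule: finite_ne_induct)
  case (singleton x) then show ?case by simp
next
  case (insert x F)
  have "N \<le> card (\<Union>F) + card (stab G (\<Union>F))" using insert by blast
  moreover have "N \<le> card x + card (stab G x)" using insert by blast
  moreover have "\<Union>F \<subseteq> carrier G" using insert by blast
  moreover have "x \<subseteq> carrier G" using insert by blast
  ultimately show ?case using union_stab[of x "\<Union>F"] by simp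
qed

lemma alg1: "a \<in> carrier G \<Longrightarrow> b \<in> carrier G \<Longrightarrow> c \<in> carrier G \<Longrightarrow> b \<otimes> (a \<otimes> inv b \<otimes> c) = a \<otimes> c"
proof -
  assume c: "a \<in> carrier G" "b \<in> carrier G" "c \<in> carrier G"
  then have "a \<otimes> inv b \<otimes> c = inv b \<otimes> (a \<otimes> c)" by (simp add: m_ac)
  then show ?thesis using c by (simp add: m_assoc[symmetric])
qed

lemma alg2: "a \<in> carrier G \<Longrightarrow> b \<in> carrier G \<Longrightarrow> c \<in> carrier G \<Longrightarrow> d \<in> carrier G \<Longrightarrow>
   (c \<otimes> inv b) \<otimes> (a \<otimes> d) = (a \<otimes> inv b \<otimes> c) \<otimes> d"
  by (simp add: m_ac)

lemma alg3: "a \<in> carrier G \<Longrightarrow> b \<in> carrier G \<Longrightarrow> (a \<otimes> inv b) \<otimes> b = a"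
  by (simp add: m_assoc)

lemma pset_sub: "A \<subseteq> carrier G \<Longrightarrow> B \<subseteq> carrier G \<Longrightarrow> pset G A B \<subseteq> carrier G"
  unfolding pset_def by auto

lemma kneser_weak:
  assumes "A \<subseteq> carrier G" "B \<subseteq> carrier G" "A \<noteq> {}" "B \<noteq> {}"
  shows "card A + card B \<le> card (pset G A B) + card (stab G (pset G A B))"
  using assms
proof (induction "card B" arbitrary: A B rule: less_induct)
  case less
  have Ac: "A \<subseteq> carrier G" and Bc: "B \<subseteq> carrier G" and Ane: "A \<noteq> {}" and Bne: "B \<noteq> {}"
    using less.prems by auto
  have finA: "finite A" and finB: "finite B" using Ac Bc fin_sub by auto
  have PC: "pset G A B \<subseteq> carrier G" using pset_sub Ac Bc by blast
  show ?case
  proof (cases "\<exists>b\<in>B. \<forall>a\<in>A. \<forall>b'\<in>B. a \<otimes> inv b \<otimes> b' \<in> A")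
    case True
    then obtain b where b: "b \<in> B" and hb: "\<And>a b'. a \<in> A \<Longrightarrow> b' \<in> B \<Longrightarrow> a \<otimes> inv b \<otimes> b' \<in> A"
      by blast
    have bc: "b \<in> carrier G" using b Bc by blast
    have P: "pset G A B = (\<lambda>a. b \<otimes> a) ` A"
    proof
      show "pset G A B \<subseteq> (\<lambda>a. b \<otimes> a) ` A"
      proof
        fix x assume "x \<in> pset G A B"
        then obtain a b' where ab: "a \<in> A" "b' \<in> B" "x = a \<otimes> b'" unfolding pset_def by blast
        have "x = b \<otimes> (a \<otimes> inv b \<otimes> b')" using ab alg1 bc Ac Bc by (auto simp: subsetD)
        then show "x \<in> (\<lambda>a. b \<otimes> a) ` A" using hb ab by blast
      qed
      show "(\<lambda>a. b \<otimes> a) ` A \<subseteq> pset G A B"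
      proof
        fix x assume "x \<in> (\<lambda>a. b \<otimes> a) ` A"
        then obtain a where a: "a \<in> A" "x = b \<otimes> a" by blast
        then have "x = a \<otimes> b" using bc Ac m_comm by (auto simp: subsetD)
        then show "x \<in> pset G A B" using a b unfolding pset_def by blast
      qed
    qed
    have injA: "inj_on (\<lambda>a. b \<otimes> a) A"
      using bc Ac unfolding inj_on_def by (metis Units_l_cancel Units_eq subsetD)
    have cP: "card (pset G A B) = card A" using P card_image[OF injA] by simp
    have SB: "(\<lambda>b'. b' \<otimes> inv b) ` B \<subseteq> stab G (pset G A B)"
    proof
      fix g assume "g \<in> (\<lambda>b'. b' \<otimes> inv b) ` B"
      then obtain b' where b': "b' \<in> B" "g = b' \<otimes> inv b" by blast
      have b'c: "b' \<in> carrier G" using b' Bc by blast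
      show "g \<in> stab G (pset G A B)"
      proof (rule stab_I)
        show "g \<in> carrier G" using b' b'c bc by simp
        show "pset G A B \<subseteq> carrier G" by (rule PC)
        fix x assume "x \<in> pset G A B"
        then obtain a d where ad: "a \<in> A" "d \<in> B" "x = a \<otimes> d" unfolding pset_def by blast
        have "g \<otimes> x = (a \<otimes> inv b \<otimes> b') \<otimes> d"
          using ad b' alg2 bc b'c Ac Bc by (auto simp: subsetD)
        then show "g \<otimes> x \<in> pset G A B" using hb[OF ad(1) b'(1)] ad unfolding pset_def by blast
      qed
    qed
    have injB: "inj_on (\<lambda>b'. b' \<otimes> inv b) B"
      using bc Bc unfolding inj_on_def by (metis right_cancel inv_closed subsetD)
    have "card B \<le> card (stab G (pset G A B))"
      using card_mono[OF finite_stab SB] card_image[OF injB] by simp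
    then show ?thesis using cP by simp
  next
    case False
    then have nb: "\<And>b. b \<in> B \<Longrightarrow> \<exists>a\<in>A. \<exists>b'\<in>B. a \<otimes> inv b \<otimes> b' \<notin> A" by blast
    define A1 where "A1 e = A \<union> (\<lambda>b. e \<otimes> b) ` B" for e
    define B1 where "B1 e = {b \<in> B. e \<otimes> b \<in> A}" for e
    define E where "E = {e \<in> carrier G. B1 e \<noteq> {} \<and> B1 e \<noteq> B}"
    define F where "F = (\<lambda>e. pset G (A1 e) (B1 e)) ` E"
    have A1c: "A1 e \<subseteq> carrier G" if "e \<in> carrier G" for e
      using that Ac Bc unfolding A1_def by auto
    have B1c: "B1 e \<subseteq> carrier G" for e using Bc unfolding B1_def by auto
    have sub: "pset G (A1 e) (B1 e) \<subseteq> pset G A B" if e: "e \<in> carrier G" for e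
    proof
      fix x assume "x \<in> pset G (A1 e) (B1 e)"
      then obtain y z where yz: "y \<in> A1 e" "z \<in> B1 e" "x = y \<otimes> z" unfolding pset_def by blast
      have zB: "z \<in> B" "e \<otimes> z \<in> A" using yz unfolding B1_def by auto
      show "x \<in> pset G A B"
      proof (cases "y \<in> A")
        case True then show ?thesis using yz zB unfolding pset_def by blast
      next
        case False
        then obtain d where d: "d \<in> B" "y = e \<otimes> d" using yz unfolding A1_def by blast
        have "x = (e \<otimes> z) \<otimes> d" using yz d zB e Bc by (auto simp: m_ac subsetD)
        then show ?thesis using zB d unfolding pset_def by blast
      qed
    qed
    have size: "card (A1 e) + card (B1 e) = card A + card B" if e: "e \<in> carrier G" for e
    proof -
      let ?eB = "(\<lambda>b. e \<otimes> b) ` B"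
      have inj: "inj_on (\<lambda>b. e \<otimes> b) B"
        using e Bc unfolding inj_on_def by (metis Units_l_cancel Units_eq subsetD)
      have ceB: "card ?eB = card B" using card_image[OF inj] .
      have "card (A1 e) + card (A \<inter> ?eB) = card A + card ?eB"
        unfolding A1_def using finA finB by (intro card_Un_Int[symmetric]) auto
      moreover have "(\<lambda>b. e \<otimes> b) ` B1 e = A \<inter> ?eB" unfolding B1_def by auto
      moreover have "card ((\<lambda>b. e \<otimes> b) ` B1 e) = card (B1 e)"
        using inj unfolding B1_def by (intro card_image) (auto intro: inj_on_subset)
      ultimately show ?thesis using ceB by simp
    qed
    have IH: "card A + card B \<le> card X + card (stab G X)" if X: "X \<in> F" for X
    proof -
      obtain e where e: "e \<in> E" "X = pset G (A1 e) (B1 e)" using X unfolding F_def by blast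
      have ec: "e \<in> carrier G" using e unfolding E_def by blast
      have "B1 e \<subset> B" using e unfolding E_def B1_def by blast
      then have lt: "card (B1 e) < card B" using finB psubset_card_mono by blast
      have "A1 e \<noteq> {}" using Ane unfolding A1_def by blast
      moreover have "B1 e \<noteq> {}" using e unfolding E_def by blast
      ultimately have "card (A1 e) + card (B1 e) \<le> card X + card (stab G X)"
        using less.hyps[OF lt A1c[OF ec] B1c] e by blast
      then show ?thesis using size[OF ec] by simp
    qed
    have Fsub: "X \<subseteq> carrier G" if "X \<in> F" for X
      using that sub PC unfolding F_def E_def by blast
    have mem: "\<exists>e\<in>E. x \<in> pset G (A1 e) (B1 e)" if x: "x \<in> pset G A B" for x
    proof -
      obtain a b where ab: "a \<in> A" "b \<in> B" "x = a \<otimes> b" using x unfolding pset_def by blast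
      obtain a' b' where ab': "a' \<in> A" "b' \<in> B" "a' \<otimes> inv b \<otimes> b' \<notin> A" using nb[OF ab(2)] by blast
      let ?e = "a' \<otimes> inv b"
      have ec: "?e \<in> carrier G" using ab' ab Ac Bc by auto
      have "?e \<otimes> b = a'" using alg3 ab' ab Ac Bc by (auto simp: subsetD)
      then have bB1: "b \<in> B1 ?e" using ab ab' unfolding B1_def by simp
      have "b' \<notin> B1 ?e" using ab' unfolding B1_def by simp
      then have "?e \<in> E" using bB1 ec ab' unfolding E_def by blast
      moreover have "x \<in> pset G (A1 ?e) (B1 ?e)" using ab bB1 unfolding pset_def A1_def by blast
      ultimately show ?thesis by blast
    qed
    have UF: "\<Union>F = pset G A B"
    proof
      show "\<Union>F \<subseteq> pset G A B" using sub unfolding F_def E_def by blast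
      show "pset G A B \<subseteq> \<Union>F" using mem unfolding F_def by blast
    qed
    have finF: "finite F" unfolding F_def E_def using fin by auto
    obtain b0 where "b0 \<in> B" using Bne by blast
    then obtain x0 where "x0 \<in> pset G A B" using Ane unfolding pset_def by blast
    then have "F \<noteq> {}" using mem unfolding F_def by blast
    then show ?thesis using union_family[OF finF _ Fsub IH] UF by simp
  qed
qed

lemma kneser_double:
  assumes A: "A \<subseteq> carrier G" "A \<noteq> {}"
  defines "K \<equiv> stab G (pset G A A)"
  shows "2 * card (pset G K A) \<le> card (pset G A A) + card K"
proof -
  have PC: "pset G A A \<subseteq> carrier G" using pset_sub A by blast
  have Kc: "K \<subseteq> carrier G" unfolding K_def by (rule stab_carrier)
  have A'c: "pset G K A \<subseteq> carrier G" using pset_sub Kc A by blast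
  have oneK: "\<one> \<in> K" unfolding K_def using stab_one[OF PC] .
  have A'ne: "pset G K A \<noteq> {}" using oneK A unfolding pset_def by blast
  have eq: "pset G (pset G K A) (pset G K A) = pset G A A"
  proof
    show "pset G (pset G K A) (pset G K A) \<subseteq> pset G A A"
    proof
      fix x assume "x \<in> pset G (pset G K A) (pset G K A)"
      then obtain k a k' a' where q: "k \<in> K" "a \<in> A" "k' \<in> K" "a' \<in> A"
        "x = (k \<otimes> a) \<otimes> (k' \<otimes> a')" unfolding pset_def by blast
      have c: "k \<in> carrier G" "a \<in> carrier G" "k' \<in> carrier G" "a' \<in> carrier G"
        using q Kc A by auto
      have "x = (k \<otimes> k') \<otimes> (a \<otimes> a')" using q c by (simp add: m_ac)
      moreover have "k \<otimes> k' \<in> K" unfolding K_def using stab_mult[OF PC] q unfolding K_def by blast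
      moreover have "a \<otimes> a' \<in> pset G A A" using q unfolding pset_def by blast
      ultimately show "x \<in> pset G A A" using stab_mem unfolding K_def by blast
    qed
    show "pset G A A \<subseteq> pset G (pset G K A) (pset G K A)"
    proof
      fix x assume "x \<in> pset G A A"
      then obtain a a' where q: "a \<in> A" "a' \<in> A" "x = a \<otimes> a'" unfolding pset_def by blast
      have "\<one> \<otimes> a \<in> pset G K A" "\<one> \<otimes> a' \<in> pset G K A" using q oneK unfolding pset_def by blast+
      moreover have "x = (\<one> \<otimes> a) \<otimes> (\<one> \<otimes> a')" using q A by (auto simp: subsetD)
      ultimately show "x \<in> pset G (pset G K A) (pset G K A)" unfolding pset_def by blast
    qed
  qed
  show ?thesis using kneser_weak[OF A'c A'c A'ne A'ne] eq unfolding K_def by simp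
qed

lemma coset_cover:
  assumes K: "subgroup K G" and A: "A \<subseteq> carrier G" "A \<noteq> {}"
  shows "\<exists>m u. 0 < m \<and> (\<forall>i\<in>{1..m}. u i \<in> A) \<and> A \<subseteq> (\<Union>i\<in>{1..m}. u i <# K)
            \<and> card (pset G K A) = m * card K"
proof -
  have Kc: "K \<subseteq> carrier G" using K subgroup.subset by blast
  define R where "R = (\<lambda>a. a <# K) ` A"
  have lr: "a <# K = K #> a" if ac: "a \<in> carrier G" for a
  proof -
    have "\<And>h. h \<in> K \<Longrightarrow> {a \<otimes> h} = {h \<otimes> a}" using ac Kc m_comm by blast
    then show ?thesis unfolding l_coset_def r_coset_def by (rule SUP_cong[OF refl])
  qed
  have Rr: "R \<subseteq> rcosets K"
  proof
    fix r assume "r \<in> R"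
    then obtain a where a: "a \<in> A" "r = a <# K" unfolding R_def by blast
    have ac: "a \<in> carrier G" using a A by blast
    show "r \<in> rcosets K" using a lr[OF ac] rcosetsI[OF Kc ac] by simp
  qed
  have disj: "pairwise disjnt R" using pairwise_subset[OF rcos_disjoint[OF K] Rr] .
  have cardc: "card r = card K" if rR: "r \<in> R" for r
  proof -
    obtain a where a: "a \<in> A" "r = a <# K" using rR unfolding R_def by blast
    have ac: "a \<in> carrier G" using a A by blast
    obtain f where "bij_betw f K (K #> a)" using card_cosets_equal[OF rcosetsI[OF Kc ac] Kc] by blast
    then have "card K = card (K #> a)" by (rule bij_betw_same_card)
    then show ?thesis using a lr[OF ac] by simp
  qed
  have finR: "finite R" unfolding R_def using fin_sub[OF A(1)] by (rule finite_imageI)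
  have finr: "finite r" if rR: "r \<in> R" for r
  proof -
    obtain a where a: "a \<in> A" "r = a <# K" using rR unfolding R_def by blast
    have "r \<subseteq> carrier G" unfolding a l_coset_def using a A Kc by auto
    then show ?thesis by (rule fin_sub)
  qed
  have P: "pset G K A = \<Union>R"
  proof
    show "pset G K A \<subseteq> \<Union>R"
    proof
      fix x assume "x \<in> pset G K A"
      then obtain k a where q: "k \<in> K" "a \<in> A" "x = k \<otimes> a" unfolding pset_def by blast
      have "k \<in> carrier G" "a \<in> carrier G" using q Kc A by auto
      then have "x = a \<otimes> k" using q m_comm by simp
      then show "x \<in> \<Union>R" using q unfolding R_def l_coset_def by blast
    qed
    show "\<Union>R \<subseteq> pset G K A"
    proof
      fix x assume "x \<in> \<Union>R"
      then obtain a k where q: "a \<in> A" "k \<in> K" "x = a \<otimes> k" unfolding R_def l_coset_def by blast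
      have "k \<in> carrier G" "a \<in> carrier G" using q Kc A by auto
      then have "x = k \<otimes> a" using q m_comm by simp
      then show "x \<in> pset G K A" using q unfolding pset_def by blast
    qed
  qed
  have cP: "card (pset G K A) = card R * card K"
    using P card_Union_disjoint[OF disj finr] cardc by simp
  obtain h where h: "bij_betw h {1..card R} R" using ex_bij_betw_nat_finite_1[OF finR] by blast
  define u where "u i = (SOME a. a \<in> A \<and> h i = a <# K)" for i
  have u: "u i \<in> A \<and> h i = u i <# K" if "i \<in> {1..card R}" for i
  proof -
    have "h i \<in> R" using bij_betwE[OF h] that by blast
    then have "\<exists>a. a \<in> A \<and> h i = a <# K" unfolding R_def by blast
    then show ?thesis unfolding u_def by (rule someI_ex)
  qed
  have cov: "A \<subseteq> (\<Union>i\<in>{1..card R}. u i <# K)"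
  proof
    fix a assume a: "a \<in> A"
    then have "a <# K \<in> R" unfolding R_def by blast
    then have "a <# K \<in> h ` {1..card R}" using bij_betw_imp_surj_on[OF h] by simp
    then obtain i where i: "i \<in> {1..card R}" "h i = a <# K" by (auto simp del: atLeastAtMost_iff)
    have "a \<otimes> \<one> \<in> a <# K" unfolding l_coset_def using subgroup.one_closed[OF K] by blast
    then have "a \<in> a <# K" using a A by (auto simp: subsetD)
    have "h i = u i <# K" using u[OF i(1)] by blast
    then have "a \<in> u i <# K" using i(2) \<open>a \<in> a <# K\<close> by simp
    then show "a \<in> (\<Union>i\<in>{1..card R}. u i <# K)" using i(1) by blast
  qed
  have "R \<noteq> {}" using A(2) unfolding R_def by blast
  then have "0 < card R" using finR by (simp add: card_gt_0_iff)
  moreover have "\<forall>i\<in>{1..card R}. u i \<in> A" using u by blast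
  ultimately show ?thesis using cov cP by (intro exI[of _ "card R"] exI[of _ u]) blast
qed

end

lemma Fp_fcg:
  assumes "prime p"
  shows "fcg (Fpstar p)"
proof -
  have pp: "prime (nat p)" using assms by simp
  interpret R: residues_prime "nat p" "residue_ring (int (nat p))"
    by unfold_locales (use pp in auto)
  have p0: "int (nat p) = p" using prime_gt_0_int[OF assms] by simp
  have fld: "field (residue_ring p)" using R.is_field p0 by simp
  have grp: "group (Fpstar p)" unfolding Fpstar_def using field.field_mult_group[OF fld] .
  have cr: "cring (residue_ring p)" using fld field.axioms(1) domain.axioms(1) by blast
  have cg: "comm_group (Fpstar p)"
  proof (rule group.group_comm_groupI[OF grp])
    fix x y assume "x \<in> carrier (Fpstar p)" "y \<in> carrier (Fpstar p)"
    then show "x \<otimes>\<^bsub>Fpstar p\<^esub> y = y \<otimes>\<^bsub>Fpstar p\<^esub> x"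
      unfolding Fpstar_def using cring.cring_simprules(14)[OF cr] by auto
  qed
  have "finite (carrier (residue_ring p))" using R.finite p0 by simp
  then have "finite (carrier (Fpstar p))" unfolding Fpstar_def by simp
  then show ?thesis using cg by (simp add: fcg_def fcg_axioms_def)
qed

theorem mainTheorem2:
  fixes p :: int and \<eta> :: real and H :: "int set"
  assumes "prime p" and "\<eta> > 0"
    and "H \<subseteq> carrier (Fpstar p)" and "H \<noteq> {}"
    and "real (card (prodset p H)) < (2 - \<eta>) * real (card H)"
  shows "\<exists>(m::nat) Hs (u::nat \<Rightarrow> int).
           0 < m \<and> real m \<le> 1 / \<eta> \<and>
           subgroup Hs (Fpstar p) \<and>
           (\<forall>i\<in>{1..m}. u i \<in> H) \<and>
           H \<subseteq> (\<Union>i\<in>{1..m}. u i <#\<^bsub>Fpstar p\<^esub> Hs) \<and>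
           real (card H) / real m \<le> real (card Hs) \<and>
           real (card Hs) \<le> (2 - \<eta>) / (2 * real m - 1) * real (card H)"
proof -
  interpret F: fcg "Fpstar p" using Fp_fcg[OF assms(1)] .
  define K where "K = stab (Fpstar p) (pset (Fpstar p) H H)"
  have PP: "pset (Fpstar p) H H = prodset p H" unfolding pset_def prodset_def by simp
  have Kg: "subgroup K (Fpstar p)"
    unfolding K_def by (rule F.stab_subgroup[OF F.pset_sub[OF assms(3) assms(3)]])
  have kd: "2 * card (pset (Fpstar p) K H) \<le> card (prodset p H) + card K"
    using F.kneser_double[OF assms(3,4)] unfolding K_def PP by simp
  obtain m u where mu: "0 < m" "\<forall>i\<in>{1..m}. u i \<in> H"
      "H \<subseteq> (\<Union>i\<in>{1..m}. u i <#\<^bsub>Fpstar p\<^esub> K)" "card (pset (Fpstar p) K H) = m * card K"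
    using F.coset_cover[OF Kg assms(3,4)] by blast
  have one: "\<one>\<^bsub>Fpstar p\<^esub> \<in> K" using subgroup.one_closed[OF Kg] .
  have Kc: "K \<subseteq> carrier (Fpstar p)" using subgroup.subset[OF Kg] .
  have "H \<subseteq> pset (Fpstar p) K H"
  proof
    fix x assume x: "x \<in> H"
    then have "x = \<one>\<^bsub>Fpstar p\<^esub> \<otimes>\<^bsub>Fpstar p\<^esub> x" using assms(3) by auto
    then show "x \<in> pset (Fpstar p) K H" using one x unfolding pset_def by blast
  qed
  moreover have "finite (pset (Fpstar p) K H)"
    using F.fin_sub[OF F.pset_sub[OF Kc assms(3)]] .
  ultimately have Hle: "card H \<le> m * card K" using card_mono mu(4) by metis
  have Kpos: "0 < card K" using one F.fin_sub[OF Kc] by (auto simp: card_gt_0_iff)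
  have Hpos: "0 < card H" using assms(4) F.fin_sub[OF assms(3)] by (auto simp: card_gt_0_iff)
  define h where "h = real (card H)"
  define k where "k = real (card K)"
  define s where "s = real (card (prodset p H))"
  define r where "r = real m"
  have a: "h \<le> r * k"
  proof -
    have "real (card H) \<le> real (m * card K)" using Hle by (simp only: of_nat_le_iff)
    then show ?thesis unfolding h_def r_def k_def by simp
  qed
  have b: "2 * r * k \<le> s + k"
  proof -
    have "real (2 * (m * card K)) \<le> real (card (prodset p H) + card K)" using kd mu(4)
      by (simp only: of_nat_le_iff)
    then show ?thesis unfolding r_def k_def s_def by simp
  qed
  have c: "s < (2 - \<eta>) * h" unfolding s_def h_def using assms(5) .
  have hp: "h > 0" unfolding h_def using Hpos by simp
  have kp: "k > 0" unfolding k_def using Kpos by simp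
  have r1: "r \<ge> 1" unfolding r_def using mu(1) by simp
  have s0: "s \<ge> 0" unfolding s_def by simp
  have e2: "2 - \<eta> > 0"
  proof -
    have "(2 - \<eta>) * h > 0" using c s0 by linarith
    then show ?thesis using hp by (simp add: zero_less_mult_iff)
  qed
  have g2: "h / r \<le> k" using a r1 by (simp add: divide_le_eq mult.commute)
  have sk: "(2 * r - 1) * k < (2 - \<eta>) * h" using b c by (simp add: algebra_simps)
  have g3: "k \<le> (2 - \<eta>) / (2 * r - 1) * h"
  proof -
    have pos: "2 * r - 1 > 0" using r1 by simp
    have "k * (2 * r - 1) \<le> (2 - \<eta>) * h" using sk by (simp add: mult.commute)
    then have "k \<le> (2 - \<eta>) * h / (2 * r - 1)" using pos by (simp add: le_divide_eq)
    then show ?thesis by simp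
  qed
  have g1: "r \<le> 1 / \<eta>"
  proof -
    have "(2 - \<eta>) * h \<le> (2 - \<eta>) * (r * k)" using a e2 by (intro mult_left_mono) auto
    then have "(2 * r - 1) * k < ((2 - \<eta>) * r) * k" using sk by (simp add: mult.assoc)
    then have "2 * r - 1 < (2 - \<eta>) * r" using kp by (simp add: mult_less_cancel_right)
    then have "\<eta> * r < 1" by (simp add: algebra_simps)
    then have "r * \<eta> \<le> 1" by (simp add: mult.commute)
    then show ?thesis using assms(2) by (simp add: le_divide_eq)
  qed
  have all: "0 < m \<and> real m \<le> 1 / \<eta> \<and> subgroup K (Fpstar p) \<and> (\<forall>i\<in>{1..m}. u i \<in> H) \<and>
      H \<subseteq> (\<Union>i\<in>{1..m}. u i <#\<^bsub>Fpstar p\<^esub> K) \<and>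
      real (card H) / real m \<le> real (card K) \<and>
      real (card K) \<le> (2 - \<eta>) / (2 * real m - 1) * real (card H)"
  proof (intro conjI)
    show "real m \<le> 1 / \<eta>" using g1 unfolding r_def .
    show "real (card H) / real m \<le> real (card K)" using g2 unfolding r_def k_def h_def .
    show "real (card K) \<le> (2 - \<eta>) / (2 * real m - 1) * real (card H)"
      using g3 unfolding r_def k_def h_def .
  qed (use mu Kg in auto)
  show ?thesis by (rule exI[of _ m], rule exI[of _ K], rule exI[of _ u], rule all)
qed

end
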